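(* Let $J$ be a $\times d$-invariant set, $\delta$ its Hausdorff dimension, $\mu=\mathcal{H}^\delta|_J$, and $\lambda$ Lebesgue measure on $\mathbb{R}$. For $x\ne y$ in $\mathbb{R}$ let $f_{x,y}$ be the unique affine map $\mathbb{R}\to\mathbb{R}$ with $f_{x,y}(x)=0$ and $f_{x,y}(y)=1$. Then: (i) for $\lambda\times\lambda$-almost every $(x,y)\in\mathbb{R}^2$, $f_{x,y}(J)\cap\mathbb{Q}=\emptyset$; (ii) for $\mu\times\lambda$-almost every $(x,y)\in\mathbb{R}^2$, $f_{x,y}(J)\cap\mathbb{Q}=\{0\}$.
   Context: Fix an integer $d\ge2$ and $E\subseteq\{0,\dots,d-1\}$ with $1<\#E<d$. The associated $\times d$-invariant set is $J=\{x\in[0,1]: x=\sum_{i\ge1}a_id^{-i}\text{ for some digits }a_i\in E\}$. *)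

theory Defs
  imports "HOL-Analysis.Analysis"
begin

text \<open>The x d-invariant set J generated by the digit set E (digit a i is the (i+1)-th digit).\<close>
definition digit_set :: "nat \<Rightarrow> nat set \<Rightarrow> real set" where
  "digit_set d E = {x \<in> {0..1}. \<exists>a :: nat \<Rightarrow> nat. (\<forall>i. a i \<in> E) \<and>
      x = (\<Sum>i. real (a i) / real d ^ (Suc i))}"

definition hcost :: "real \<Rightarrow> real set \<Rightarrow> ennreal" where
  "hcost s U = (if U = {} then 0 else if s = 0 then 1 else ennreal (diameter U powr s))"

definition hausdorff_pre :: "real \<Rightarrow> real \<Rightarrow> real set \<Rightarrow> ennreal" where
  "hausdorff_pre s r A = (INF U \<in> {U :: nat \<Rightarrow> real set. A \<subseteq> (\<Union>i. U i) \<and>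
        (\<forall>i. bounded (U i) \<and> diameter (U i) \<le> r)}. (\<Sum>i. hcost s (U i)))"

definition hausdorff_measure :: "real \<Rightarrow> real set \<Rightarrow> ennreal" where
  "hausdorff_measure s A = (SUP r \<in> {0<..}. hausdorff_pre s r A)"

definition hausdorff_dim :: "real set \<Rightarrow> real" where
  "hausdorff_dim A = Inf {s. 0 \<le> s \<and> hausdorff_measure s A = 0}"

definition hausdorff_restr :: "real \<Rightarrow> real set \<Rightarrow> real measure" where
  "hausdorff_restr s J = measure_of UNIV (sets borel) (\<lambda>A. hausdorff_measure s (A \<inter> J))"

definition aff :: "real \<Rightarrow> real \<Rightarrow> real \<Rightarrow> real" where
  "aff x y t = (t - x) / (y - x)"

end

theory Submission
  imports Defs
begin

lemma digit_sum_bound: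
  fixes b :: "nat \<Rightarrow> real" and d :: nat
  assumes d: "d \<ge> 2" and b: "\<And>i. 0 \<le> b i \<and> b i \<le> real d - 1"
  shows "summable (\<lambda>i. b i / real d ^ Suc i) \<and> 0 \<le> (\<Sum>i. b i / real d ^ Suc i)
         \<and> (\<Sum>i. b i / real d ^ Suc i) \<le> 1"
proof -
  have dpos: "real d > 1" using d by simp
  have g: "(\<lambda>i. (1 / real d) ^ i) sums (1 / (1 - 1 / real d))"
    by (rule geometric_sums) (use dpos in simp)
  have g2: "(\<lambda>i. ((real d - 1) / real d) * (1 / real d) ^ i) sums
             (((real d - 1) / real d) * (1 / (1 - 1 / real d)))"
    by (rule sums_mult[OF g])
  have e: "((real d - 1) / real d) * (1 / (1 - 1 / real d)) = 1"
    using dpos by (simp add: field_simps)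
  have eq: "\<And>i. ((real d - 1) / real d) * (1 / real d) ^ i = (real d - 1) / real d ^ Suc i"
    by (simp add: power_divide field_simps)
  have M: "(\<lambda>i. (real d - 1) / real d ^ Suc i) sums 1"
    using g2 unfolding e eq .
  have le: "\<And>i. b i / real d ^ Suc i \<le> (real d - 1) / real d ^ Suc i"
    using b dpos by (intro divide_right_mono) auto
  have nn: "\<And>i. 0 \<le> b i / real d ^ Suc i" using b dpos by auto
  have s: "summable (\<lambda>i. b i / real d ^ Suc i)"
  proof (rule summable_comparison_test'[of "\<lambda>i. (real d - 1) / real d ^ Suc i" 0])
    show "summable (\<lambda>i. (real d - 1) / real d ^ Suc i)" using M by (simp add: sums_iff)
    fix n show "norm (b n / real d ^ Suc n) \<le> (real d - 1) / real d ^ Suc n"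
      using nn[of n] le[of n] by simp
  qed
  moreover have "0 \<le> (\<Sum>i. b i / real d ^ Suc i)" using s nn by (simp add: suminf_nonneg)
  moreover have "(\<Sum>i. b i / real d ^ Suc i) \<le> 1"
    using suminf_le[OF le s] M by (simp add: sums_iff)
  ultimately show ?thesis by blast
qed

lemma digit_set_alt:
  "digit_set d E = {0..1} \<inter> (\<lambda>b. \<Sum>i. b i / real d ^ Suc i) ` (PiE UNIV (\<lambda>_. real ` E))"
proof (intro equalityI subsetI)
  fix x assume "x \<in> digit_set d E"
  then obtain a where a: "\<forall>i. a i \<in> E" "x = (\<Sum>i. real (a i) / real d ^ (Suc i))" "x \<in> {0..1}"
    unfolding digit_set_def by blast
  have "(\<lambda>i. real (a i)) \<in> PiE UNIV (\<lambda>_. real ` E)" using a(1) by auto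
  then show "x \<in> {0..1} \<inter> (\<lambda>b. \<Sum>i. b i / real d ^ Suc i) ` (PiE UNIV (\<lambda>_. real ` E))"
    using a by (intro IntI image_eqI[where x="\<lambda>i. real (a i)"]) auto
next
  fix x assume "x \<in> {0..1} \<inter> (\<lambda>b. \<Sum>i. b i / real d ^ Suc i) ` (PiE UNIV (\<lambda>_. real ` E))"
  then obtain b where b: "b \<in> PiE UNIV (\<lambda>_. real ` E)" "x = (\<Sum>i. b i / real d ^ Suc i)" "x \<in> {0..1}"
    by blast
  define a where "a i = nat \<lfloor>b i\<rfloor>" for i
  have "\<forall>i. a i \<in> E \<and> real (a i) = b i"
  proof
    fix i obtain e where "e \<in> E" "b i = real e" using b(1) by (auto simp: PiE_iff)
    then show "a i \<in> E \<and> real (a i) = b i" by (simp add: a_def)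
  qed
  then show "x \<in> digit_set d E" unfolding digit_set_def using b by auto
qed

lemma closed_digit_set:
  assumes d: "d \<ge> 2" and E: "E \<subseteq> {0..<d}"
  shows "closed (digit_set d E)"
proof -
  let ?P = "PiE UNIV (\<lambda>_. real ` E) :: (nat \<Rightarrow> real) set"
  have fin: "finite E" using E finite_subset by blast
  have "compactin (product_topology (\<lambda>_. euclidean) UNIV) ?P"
    using fin by (subst compactin_PiE) (auto intro: finite_imp_compact)
  hence cP: "compact ?P" by (simp add: euclidean_product_topology)
  have bnd: "\<And>b i. b \<in> ?P \<Longrightarrow> 0 \<le> b i \<and> b i \<le> real d - 1"
  proof -
    fix b :: "nat \<Rightarrow> real" and i assume "b \<in> ?P"
    then obtain e where "e \<in> E" "b i = real e" by (auto simp: PiE_iff)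
    with E have "e \<le> d - 1" "b i = real e" by auto
    thus "0 \<le> b i \<and> b i \<le> real d - 1" using d by (simp add: of_nat_diff)
  qed
  have ul: "uniform_limit ?P (\<lambda>n b. \<Sum>i<n. b i / real d ^ Suc i) (\<lambda>b. \<Sum>i. b i / real d ^ Suc i) sequentially"
  proof (rule Weierstrass_m_test)
    fix n and b :: "nat \<Rightarrow> real" assume "b \<in> ?P"
    thus "norm (b n / real d ^ Suc n) \<le> (real d - 1) / real d ^ Suc n"
      using bnd[of b n] d by (auto intro!: divide_right_mono)
  next
    show "summable (\<lambda>n. (real d - 1) / real d ^ Suc n)"
      using digit_sum_bound[OF d, of "\<lambda>_. real d - 1"] d by simp
  qed
  have "continuous_on ?P (\<lambda>b. \<Sum>i. b i / real d ^ Suc i)"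
  proof (rule uniform_limit_theorem[OF _ ul])
    show "\<forall>\<^sub>F n in sequentially. continuous_on ?P (\<lambda>b. \<Sum>i<n. b i / real d ^ Suc i)"
      by (intro always_eventually allI continuous_intros continuous_on_subset[OF continuous_on_product_coordinates]) (use d in auto)
  qed simp
  hence "compact ((\<lambda>b. \<Sum>i. b i / real d ^ Suc i) ` ?P)"
    using cP compact_continuous_image by blast
  hence "closed ((\<lambda>b. \<Sum>i. b i / real d ^ Suc i) ` ?P)" by (rule compact_imp_closed)
  thus ?thesis unfolding digit_set_alt by (intro closed_Int) auto
qed

lemma digit_set_cover:
  assumes d: "d \<ge> 2" and E: "E \<subseteq> {0..<d}" and x: "x \<in> digit_set d E"
  shows "\<exists>w \<in> PiE {..<n} (\<lambda>_. E). x \<in> {(\<Sum>i<n. real (w i) / real d ^ Suc i) ..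
            (\<Sum>i<n. real (w i) / real d ^ Suc i) + 1 / real d ^ n}"
proof -
  obtain a where a: "\<forall>i. a i \<in> E" "x = (\<Sum>i. real (a i) / real d ^ (Suc i))"
    using x unfolding digit_set_def by blast
  have bnd: "\<And>k i. 0 \<le> real (a (i + k)) \<and> real (a (i + k)) \<le> real d - 1"
  proof -
    fix i k have "a (i + k) < d" using a E by auto
    thus "0 \<le> real (a (i + k)) \<and> real (a (i + k)) \<le> real d - 1" by linarith
  qed
  have bnd0: "\<And>i. 0 \<le> real (a i) \<and> real (a i) \<le> real d - 1" using bnd[where k=0] by simp
  note S0 = digit_sum_bound[OF d, of "\<lambda>i. real (a i)", OF bnd0]
  note S1 = digit_sum_bound[OF d, of "\<lambda>i. real (a (i + n))"]
  have dpos: "real d > 0" using d by simp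
  have split: "x = (\<Sum>i. real (a (i + n)) / real d ^ Suc (i + n)) + (\<Sum>i<n. real (a i) / real d ^ Suc i)"
  proof -
    have "summable (\<lambda>i. real (a i) / real d ^ Suc i)" using S0 by simp
    from suminf_split_initial_segment[OF this, of n] show ?thesis using a(2) by simp
  qed
  have eqt: "(\<lambda>i. real (a (i + n)) / real d ^ Suc (i + n)) = (\<lambda>i. (real (a (i + n)) / real d ^ Suc i) / real d ^ n)"
    by (simp add: power_add field_simps)
  have tail: "(\<Sum>i. real (a (i + n)) / real d ^ Suc (i + n)) = (\<Sum>i. real (a (i + n)) / real d ^ Suc i) / real d ^ n"
    unfolding eqt using S1 bnd by (intro suminf_divide) auto
  have t0: "0 \<le> (\<Sum>i. real (a (i + n)) / real d ^ Suc (i + n))"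
    and t1: "(\<Sum>i. real (a (i + n)) / real d ^ Suc (i + n)) \<le> 1 / real d ^ n"
    unfolding tail using S1 bnd dpos by (auto intro!: divide_right_mono)
  have "restrict a {..<n} \<in> PiE {..<n} (\<lambda>_. E)" using a(1) by auto
  moreover have "(\<Sum>i<n. real (restrict a {..<n} i) / real d ^ Suc i) = (\<Sum>i<n. real (a i) / real d ^ Suc i)"
    by (intro sum.cong) auto
  ultimately show ?thesis using split t0 t1
    by (intro bexI[where x="restrict a {..<n}"]) auto
qed

lemma null_digit_set:
  assumes d: "d \<ge> 2" and E: "E \<subseteq> {0..<d}" and c: "card E < d"
  shows "digit_set d E \<in> null_sets lborel"
proof -
  let ?J = "digit_set d E"
  have Jm: "?J \<in> sets lborel" using closed_digit_set[OF d E] by simp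
  have fin: "finite E" using E finite_subset by blast
  have dpos: "real d > 0" using d by simp
  have bound: "emeasure lborel ?J \<le> ennreal ((real (card E) / real d) ^ n)" for n
  proof -
    let ?W = "PiE {..<n} (\<lambda>_. E)"
    let ?s = "\<lambda>w. (\<Sum>i<n. real (w i) / real d ^ Suc i)"
    let ?I = "\<lambda>w. {?s w .. ?s w + 1 / real d ^ n}"
    have finW: "finite ?W" using fin by (simp add: finite_PiE)
    have cardW: "card ?W = card E ^ n" by (simp add: card_PiE)
    have "?J \<subseteq> (\<Union>w\<in>?W. ?I w)" using digit_set_cover[OF d E] by blast
    hence "emeasure lborel ?J \<le> emeasure lborel (\<Union>w\<in>?W. ?I w)"
      by (intro emeasure_mono sets.finite_UN finW) simp_all
    also have "\<dots> \<le> (\<Sum>w\<in>?W. emeasure lborel (?I w))"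
      by (intro emeasure_subadditive_finite finW) (simp add: image_subset_iff)
    also have "\<dots> = (\<Sum>w\<in>?W. ennreal (1 / real d ^ n))"
    proof (intro sum.cong refl)
      fix w have "?s w \<le> ?s w + 1 / real d ^ n" using dpos by simp
      thus "emeasure lborel (?I w) = ennreal (1 / real d ^ n)" by (simp only: emeasure_lborel_Icc) simp
    qed
    also have "\<dots> = of_nat (card ?W) * ennreal (1 / real d ^ n)"
      by (rule sum_constant)
    also have "\<dots> = ennreal (real (card ?W)) * ennreal (1 / real d ^ n)"
      by (simp only: ennreal_of_nat_eq_real_of_nat)
    also have "\<dots> = ennreal (real (card ?W) * (1 / real d ^ n))"
      by (rule ennreal_mult[symmetric]) auto
    also have "\<dots> = ennreal ((real (card E) / real d) ^ n)"
      by (simp add: cardW power_divide)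
    finally show ?thesis .
  qed
  have lim: "(\<lambda>n. ennreal ((real (card E) / real d) ^ n)) \<longlonglongrightarrow> ennreal 0"
    using c dpos by (intro tendsto_ennrealI LIMSEQ_power_zero) (auto simp: divide_simps)
  have "emeasure lborel ?J \<le> 0"
    using LIMSEQ_le_const[OF lim, of "emeasure lborel ?J"] bound by simp
  thus ?thesis using Jm by (simp add: null_sets_def)
qed

lemma AE_pair_measure_sf2:
  assumes sf: "sigma_finite_measure M2"
    and meas: "{x\<in>space (M1 \<Otimes>\<^sub>M M2). P x} \<in> sets (M1 \<Otimes>\<^sub>M M2)"
    and ae: "AE x in M1. AE y in M2. P (x, y)"
  shows "AE x in M1 \<Otimes>\<^sub>M M2. P x"
proof (subst AE_iff_measurable[OF _ refl])
  show "{x\<in>space (M1 \<Otimes>\<^sub>M M2). \<not> P x} \<in> sets (M1 \<Otimes>\<^sub>M M2)"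
    by (rule sets.sets_Collect) fact
  then have "emeasure (M1 \<Otimes>\<^sub>M M2) {x \<in> space (M1 \<Otimes>\<^sub>M M2). \<not> P x} =
      (\<integral>\<^sup>+ x. \<integral>\<^sup>+ y. indicator {x \<in> space (M1 \<Otimes>\<^sub>M M2). \<not> P x} (x, y) \<partial>M2 \<partial>M1)"
    by (simp add: sigma_finite_measure.emeasure_pair_measure[OF sf])
  also have "\<dots> = (\<integral>\<^sup>+ x. \<integral>\<^sup>+ y. 0 \<partial>M2 \<partial>M1)"
    using ae
    apply (safe intro!: nn_integral_cong_AE)
    apply (intro AE_I2)
    apply (safe intro!: nn_integral_cong_AE)
    apply auto
    done
  finally show "emeasure (M1 \<Otimes>\<^sub>M M2) {x \<in> space (M1 \<Otimes>\<^sub>M M2). \<not> P x} = 0" by simp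
qed

lemma hausdorff_measure_empty: "hausdorff_measure s {} = 0"
proof -
  have "hausdorff_pre s r {} = 0" if "r > 0" for r
  proof -
    have "hausdorff_pre s r {} \<le> (\<Sum>i. hcost s ((\<lambda>i. {}) i))"
      unfolding hausdorff_pre_def using that by (intro INF_lower) auto
    also have "\<dots> = 0" by (simp add: hcost_def)
    finally show ?thesis by simp
  qed
  thus ?thesis unfolding hausdorff_measure_def by simp
qed

lemma sets_hausdorff_restr: "sets (hausdorff_restr s J) = sets borel"
  unfolding hausdorff_restr_def using sets.sigma_sets_eq[of borel] by (simp add: sets_measure_of_conv)

lemma space_hausdorff_restr: "space (hausdorff_restr s J) = UNIV"
  unfolding hausdorff_restr_def by (simp add: space_measure_of_conv)

lemma emeasure_hausdorff_restr_compl: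
  assumes "J \<in> sets borel"
  shows "emeasure (hausdorff_restr s J) (- J) = 0"
  unfolding hausdorff_restr_def emeasure_measure_of_conv
  by (simp add: hausdorff_measure_empty)

theorem mainTheorem3:
  fixes d :: nat and E :: "nat set"
  assumes "d \<ge> 2" and "E \<subseteq> {0..<d}" and "1 < card E" and "card E < d"
  defines "J \<equiv> digit_set d E"
  defines "\<mu> \<equiv> hausdorff_restr (hausdorff_dim J) J"
  shows "(AE p in lborel \<Otimes>\<^sub>M lborel. fst p \<noteq> snd p \<longrightarrow>
            aff (fst p) (snd p) ` J \<inter> \<rat> = {}) \<and>
         (AE p in \<mu> \<Otimes>\<^sub>M lborel. fst p \<noteq> snd p \<longrightarrow>
            aff (fst p) (snd p) ` J \<inter> \<rat> = {0})"
proof -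
  have Jnull: "J \<in> null_sets lborel" unfolding J_def using null_digit_set assms by blast
  have Jb[measurable]: "J \<in> sets borel" unfolding J_def using closed_digit_set assms by simp
  have AEJ: "AE z in lborel. z \<notin> J" using Jnull by (rule AE_not_in)
  have aff: "AE y in lborel. t + c * y \<notin> J" if "c \<noteq> 0" for t c
    by (rule AE_borel_affine[OF that _ AEJ]) measurable
  define Q where "Q p = (\<forall>r::rat. r \<noteq> 0 \<longrightarrow> (1 - real_of_rat r) * fst p + real_of_rat r * snd p \<notin> J)" for p
  have Qm[measurable]: "Measurable.pred (borel \<Otimes>\<^sub>M borel) Q"
    unfolding Q_def by measurable
  have inner: "AE y in lborel. Q (x, y)" for x
    unfolding Q_def using aff by (simp add: AE_all_countable)
  have key: "aff x y ` J \<inter> \<rat> \<subseteq> {0}" if "Q (x, y)" "x \<noteq> y" for x y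
  proof
    fix q assume "q \<in> aff x y ` J \<inter> \<rat>"
    then obtain t r where t: "t \<in> J" "q = (t - x) / (y - x)" "q = real_of_rat r"
      unfolding aff_def by (auto elim: Rats_cases)
    have "t = (1 - q) * x + q * y" using t(2) that(2) by (simp add: field_simps)
    show "q \<in> {0}"
    proof (rule ccontr)
      assume "q \<notin> {0}"
      hence "r \<noteq> 0" using t(3) by auto
      hence "(1 - real_of_rat r) * x + real_of_rat r * y \<notin> J" using that(1) unfolding Q_def by auto
      thus False using \<open>t = (1 - q) * x + q * y\<close> t by simp
    qed
  qed
  have sf: "sigma_finite_measure lborel" by (rule lborel.sigma_finite_measure_axioms)
  have part1: "AE p in lborel \<Otimes>\<^sub>M lborel. fst p \<notin> J \<and> Q p"
  proof (rule AE_pair_measure_sf2[OF sf])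
    show "{x \<in> space (lborel \<Otimes>\<^sub>M lborel). fst x \<notin> J \<and> Q x} \<in> sets (lborel \<Otimes>\<^sub>M lborel)"
      by measurable
    show "AE x in lborel. AE y in lborel. fst (x, y) \<notin> J \<and> Q (x, y)"
      using AEJ by eventually_elim (use inner in simp)
  qed
  have part2: "AE p in \<mu> \<Otimes>\<^sub>M lborel. fst p \<in> J \<and> Q p"
  proof (rule AE_pair_measure_sf2[OF sf])
    have S: "sets (\<mu> \<Otimes>\<^sub>M lborel) = sets (borel \<Otimes>\<^sub>M borel)"
      unfolding \<mu>_def by (intro sets_pair_measure_cong sets_hausdorff_restr) simp
    have Sp: "space (\<mu> \<Otimes>\<^sub>M lborel) = space (borel \<Otimes>\<^sub>M borel)"
      unfolding space_pair_measure \<mu>_def space_hausdorff_restr by simp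
    have m: "{x \<in> space (borel \<Otimes>\<^sub>M borel). fst x \<in> J \<and> Q x} \<in> sets (borel \<Otimes>\<^sub>M borel)"
      by measurable
    show "{x \<in> space (\<mu> \<Otimes>\<^sub>M lborel). fst x \<in> J \<and> Q x} \<in> sets (\<mu> \<Otimes>\<^sub>M lborel)"
      unfolding S Sp by (rule m)
    have "AE x in \<mu>. x \<in> J"
    proof (rule AE_I')
      show "- J \<in> null_sets \<mu>"
        unfolding \<mu>_def using Jb
        by (simp add: null_sets_def sets_hausdorff_restr emeasure_hausdorff_restr_compl)
    qed auto
    thus "AE x in \<mu>. AE y in lborel. fst (x, y) \<in> J \<and> Q (x, y)"
      by eventually_elim (use inner in simp)
  qed
  show ?thesis
  proof
    show "AE p in lborel \<Otimes>\<^sub>M lborel. fst p \<noteq> snd p \<longrightarrow> aff (fst p) (snd p) ` J \<inter> \<rat> = {}"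
      using part1
    proof eventually_elim
      case (elim p)
      obtain x y where p: "p = (x, y)" by (cases p)
      show ?case
      proof
        assume xy: "fst p \<noteq> snd p"
        have "aff x y ` J \<inter> \<rat> \<subseteq> {0}" using key elim xy p by auto
        moreover have "0 \<notin> aff x y ` J"
        proof
          assume "0 \<in> aff x y ` J"
          then obtain t where "t \<in> J" "(t - x) / (y - x) = 0" unfolding aff_def by auto
          thus False using xy elim p by auto
        qed
        ultimately show "aff (fst p) (snd p) ` J \<inter> \<rat> = {}" using p by auto
      qed
    qed
    show "AE p in \<mu> \<Otimes>\<^sub>M lborel. fst p \<noteq> snd p \<longrightarrow> aff (fst p) (snd p) ` J \<inter> \<rat> = {0}"
      using part2
    proof eventually_elim
      case (elim p)
      obtain x y where p: "p = (x, y)" by (cases p)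
      show ?case
      proof
        assume xy: "fst p \<noteq> snd p"
        have "aff x y ` J \<inter> \<rat> \<subseteq> {0}" using key elim xy p by auto
        moreover have "0 \<in> aff x y ` J"
          using elim p unfolding aff_def by (intro image_eqI[where x=x]) auto
        ultimately show "aff (fst p) (snd p) ` J \<inter> \<rat> = {0}" using p by auto
      qed
    qed
  qed
qed

end
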